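(* Let $(X,d_X,\mu_X)$ be an mm-space with $X=\operatorname{supp}\mu_X$. Any measure $\mu\in\mathcal M(X;1)$ satisfying $\operatorname{diam}\operatorname{supp}\mu=\operatorname{diam}X<\infty$ is a maximal element of $\mathcal M(X;1)$ with respect to the Lipschitz order.
   Context: An mm-space is a triple $(X,d_X,\mu_X)$ where $(X,d_X)$ is a complete separable metric space and $\mu_X$ is a Borel probability measure on $X$. The 1-measurement is $\mathcal M(X;1):=\{f_*\mu_X \mid f:X\to\mathbb R \text{ is 1-Lipschitz}\}$, a set of Borel probability measures on $\mathbb R$. Two mm-spaces $X,Y$ are mm-isomorphic if there is an isometry $f:\operatorname{supp}\mu_X\to\operatorname{supp}\mu_Y$ with $f_*\mu_X=\mu_Y$. For mm-spaces $X,Y$, write $Y\prec X$ (Lipschitz order) if there is a 1-Lipschitz map $f:\operatorname{supp}\mu_X\to\operatorname{supp}\mu_Y$ with $f_*\mu_X=\mu_Y$; this is a partial order on mm-isomorphism classes. For Borel probability measures $\mu,\nu$ on $\mathbb R$, $\mu\prec\nu$ means $(\mathbb R,|\cdot|,\mu)\prec(\mathbb R,|\cdot|,\nu)$. An element $\mu\in\mathcal M(X;1)$ is maximal if every $\nu\in\mathcal M(X;1)$ with $\mu\prec\nu$ has $(\mathbb R,|\cdot|,\nu)$ mm-isomorphic to $(\mathbb R,|\cdot|,\mu)$. The diameter of a set $A$ is $\sup_{x,y\in A}d(x,y)$. *)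

theory Defs
  imports "HOL-Probability.Probability"
begin

text \<open>Support of a Borel measure on a separable metric space:
  the set of points all of whose open balls have positive measure
  (equivalently, the smallest closed set of full measure).\<close>
definition msupp :: "'a::metric_space measure \<Rightarrow> 'a set" where
  "msupp M = {x. \<forall>e>0. emeasure M (ball x e) > 0}"

definition measurement1 :: "'a::metric_space measure \<Rightarrow> real measure set" where
  "measurement1 M = {distr M borel f | f. 1-lipschitz_on UNIV f}"

text \<open>Lipschitz order on Borel probability measures on the real line:
  lip_le mu nu means (R,|.|,mu) \<prec> (R,|.|,nu), i.e. there is a 1-Lipschitz map
  f : supp nu \<rightarrow> supp mu with f_* nu = mu.\<close>
definition lip_le :: "real measure \<Rightarrow> real measure \<Rightarrow> bool" where
  "lip_le mu nu \<longleftrightarrow> (\<exists>f. 1-lipschitz_on (msupp nu) f \<and> f ` msupp nu \<subseteq> msupp mu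
      \<and> distr (restrict_space nu (msupp nu)) borel f = mu)"

definition mm_iso_real :: "real measure \<Rightarrow> real measure \<Rightarrow> bool" where
  "mm_iso_real mu nu \<longleftrightarrow> (\<exists>f. (\<forall>x\<in>msupp mu. \<forall>y\<in>msupp mu. dist (f x) (f y) = dist x y)
      \<and> f ` msupp mu = msupp nu
      \<and> distr (restrict_space mu (msupp mu)) borel f = nu)"

definition maximal_in_measurement1 :: "'a::metric_space measure \<Rightarrow> real measure \<Rightarrow> bool" where
  "maximal_in_measurement1 M mu \<longleftrightarrow> mu \<in> measurement1 M \<and>
     (\<forall>nu\<in>measurement1 M. lip_le mu nu \<longrightarrow> mm_iso_real nu mu)"

end

theory Submission
  imports Defs
begin

lemma msupp_closed:
  fixes N :: "'a::metric_space measure"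
  assumes "sets N = sets borel"
  shows "closed (msupp N)"
proof -
  have "open (- msupp N)"
    unfolding open_contains_ball
  proof
    fix x assume "x \<in> - msupp N"
    then obtain e where e: "e > 0" "\<not> emeasure N (ball x e) > 0"
      unfolding msupp_def by auto
    have "ball x e \<subseteq> - msupp N"
    proof
      fix y assume y: "y \<in> ball x e"
      define e' where "e' = e - dist x y"
      have "e' > 0" using y by (simp add: e'_def)
      have sub: "ball y e' \<subseteq> ball x e"
        unfolding e'_def by (smt (verit) dist_commute dist_triangle mem_ball subsetI)
      have "emeasure N (ball y e') \<le> emeasure N (ball x e)"
        by (rule emeasure_mono[OF sub]) (simp add: assms)
      moreover have "emeasure N (ball x e) = 0" using e(2) by (simp add: not_gr_zero)
      ultimately have "\<not> emeasure N (ball y e') > 0" by simp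
      then show "y \<in> - msupp N" using \<open>e' > 0\<close> unfolding msupp_def by auto
    qed
    then show "\<exists>e>0. ball x e \<subseteq> - msupp N" using e by blast
  qed
  then show ?thesis by (simp add: closed_def)
qed

lemma msupp_distr:
  fixes M :: "'a::metric_space measure" and h :: "'a \<Rightarrow> real"
  assumes "sets M = sets borel" "continuous_on UNIV h"
  shows "msupp (distr M borel h) \<subseteq> closure (range h)"
proof
  fix x assume x: "x \<in> msupp (distr M borel h)"
  have hm: "h \<in> measurable M borel"
    using borel_measurable_continuous_onI[OF assms(2)] measurable_cong_sets[OF assms(1) refl] by blast
  show "x \<in> closure (range h)"
  proof (rule ccontr)
    assume "x \<notin> closure (range h)"
    then obtain e where e0: "e > 0" and e1: "\<forall>z. \<not> dist x (h z) < e"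
      unfolding closure_approachable by (auto simp: dist_commute)
    have e: "e > 0" "ball x e \<inter> range h = {}" using e0 e1 by auto
    have "emeasure (distr M borel h) (ball x e) = emeasure M (h -` ball x e \<inter> space M)"
      by (rule emeasure_distr[OF hm]) simp
    also have "h -` ball x e \<inter> space M = {}" using e(2) by auto
    finally have "emeasure (distr M borel h) (ball x e) = 0" by simp
    with x e(1) show False unfolding msupp_def by auto
  qed
qed

lemma msupp_dense:
  fixes nu :: "real measure" and f :: "real \<Rightarrow> real"
  assumes "sets nu = sets borel" "continuous_on S f"
  shows "msupp (distr (restrict_space nu S) borel f) \<subseteq> closure (f ` S)"
proof
  fix y assume y: "y \<in> msupp (distr (restrict_space nu S) borel f)"
  have fm: "f \<in> measurable (restrict_space nu S) borel"
    using borel_measurable_continuous_on_restrict[OF assms(2)]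
      measurable_cong_sets[OF sets_restrict_space_cong[OF assms(1)] refl] by blast
  show "y \<in> closure (f ` S)"
    unfolding closure_approachable
  proof (intro allI impI)
    fix e :: real assume e: "e > 0"
    have "emeasure (distr (restrict_space nu S) borel f) (ball y e)
        = emeasure (restrict_space nu S) (f -` ball y e \<inter> space (restrict_space nu S))"
      by (rule emeasure_distr[OF fm]) simp
    moreover have "emeasure (distr (restrict_space nu S) borel f) (ball y e) > 0"
      using y e unfolding msupp_def by auto
    ultimately have "f -` ball y e \<inter> space (restrict_space nu S) \<noteq> {}" by auto
    then obtain x where "x \<in> S" "f x \<in> ball y e"
      by (auto simp: space_restrict_space)
    then show "\<exists>z\<in>f ` S. dist z y < e" by (metis dist_commute image_eqI mem_ball)
  qed
qed

lemma key_real: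
  fixes S T :: "real set" and f :: "real \<Rightarrow> real"
  assumes S: "closed S" "bounded S" and Tb: "bounded T"
    and L: "1-lipschitz_on S f" and sub: "f ` S \<subseteq> T" and dense: "T \<subseteq> closure (f ` S)"
    and D: "diameter S \<le> diameter T"
  shows "(\<forall>x\<in>S. \<forall>y\<in>S. dist (f x) (f y) = dist x y) \<and> f ` S = T"
proof (cases "S = {}")
  case True then show ?thesis using dense sub by auto
next
  case False
  have cS: "compact S" using S compact_eq_bounded_closed by blast
  have cont: "continuous_on S f" using L lipschitz_on_continuous_on by blast
  have cI: "compact (f ` S)" using compact_continuous_image[OF cont cS] .
  have "closure (f ` S) = f ` S" using closure_closed compact_imp_closed[OF cI] by blast
  hence T: "T = f ` S" using sub dense by auto
  obtain a where a: "a \<in> S" "\<forall>x\<in>S. f a \<le> f x"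
    using continuous_attains_inf[OF cS False cont] by blast
  obtain b where b: "b \<in> S" "\<forall>x\<in>S. f x \<le> f b"
    using continuous_attains_sup[OF cS False cont] by blast
  have Ld: "\<forall>x\<in>S. \<forall>y\<in>S. \<bar>f x - f y\<bar> \<le> \<bar>x - y\<bar>"
    using L unfolding lipschitz_on_def dist_real_def by auto
  have dS: "\<forall>x\<in>S. \<forall>y\<in>S. \<bar>x - y\<bar> \<le> diameter S"
    using diameter_bounded_bound[OF S(2)] by (simp add: dist_real_def)
  have dT: "diameter T \<le> f b - f a"
  proof (rule diameter_le)
    show "T \<noteq> {} \<or> 0 \<le> f b - f a" using T False by auto
    fix x y assume "x \<in> T" "y \<in> T"
    then obtain x' y' where "x' \<in> S" "y' \<in> S" "x = f x'" "y = f y'" using T by auto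
    moreover have "f a \<le> f x'" "f x' \<le> f b" "f a \<le> f y'" "f y' \<le> f b" using a b calculation by auto
    ultimately show "norm (x - y) \<le> f b - f a" by (auto simp: abs_le_iff)
  qed
  have ab: "f b - f a = \<bar>a - b\<bar>" using dS a b D dT Ld by force
  have fx: "\<forall>x\<in>S. f x = f a + \<bar>x - a\<bar> \<and> (a \<le> b \<longrightarrow> a \<le> x \<and> x \<le> b) \<and> (b \<le> a \<longrightarrow> b \<le> x \<and> x \<le> a)"
  proof
    fix x assume x: "x \<in> S"
    have 1: "\<bar>x - a\<bar> \<le> \<bar>a - b\<bar>" "\<bar>x - b\<bar> \<le> \<bar>a - b\<bar>" using dS a b D dT ab x by force+
    have 2: "\<bar>f x - f a\<bar> \<le> \<bar>x - a\<bar>" "\<bar>f x - f b\<bar> \<le> \<bar>x - b\<bar>" using Ld[rule_format, OF x a(1)] Ld[rule_format, OF x b(1)] by auto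
    have 3: "f a \<le> f x" "f x \<le> f b" using a b x by auto
    show "f x = f a + \<bar>x - a\<bar> \<and> (a \<le> b \<longrightarrow> a \<le> x \<and> x \<le> b) \<and> (b \<le> a \<longrightarrow> b \<le> x \<and> x \<le> a)"
      using 1 2 3 ab by linarith
  qed
  have "\<forall>x\<in>S. \<forall>y\<in>S. dist (f x) (f y) = dist x y"
  proof (intro ballI)
    fix x y assume "x \<in> S" "y \<in> S"
    then have "f x = f a + \<bar>x - a\<bar> \<and> (a \<le> b \<longrightarrow> a \<le> x \<and> x \<le> b) \<and> (b \<le> a \<longrightarrow> b \<le> x \<and> x \<le> a)"
      "f y = f a + \<bar>y - a\<bar> \<and> (a \<le> b \<longrightarrow> a \<le> y \<and> y \<le> b) \<and> (b \<le> a \<longrightarrow> b \<le> y \<and> y \<le> a)"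
      using fx by auto
    then show "dist (f x) (f y) = dist x y" unfolding dist_real_def by linarith
  qed
  then show ?thesis using T by auto
qed

lemma lip_range_bounded:
  fixes h :: "'a::metric_space \<Rightarrow> real"
  assumes "bounded (UNIV :: 'a set)" "1-lipschitz_on UNIV h"
  shows "bounded (range h)"
proof -
  obtain x0 e where e: "\<forall>y::'a. dist x0 y \<le> e" using assms(1) unfolding bounded_def by (meson UNIV_I)
  have "\<forall>y. dist (h x0) (h y) \<le> e"
    using e assms(2) unfolding lipschitz_on_def by (smt (verit) UNIV_I)
  then show ?thesis unfolding bounded_def by blast
qed

theorem proposition1p2:
  fixes M :: "'a::polish_space measure" and mu :: "real measure"
  assumes "prob_space M" and "sets M = sets borel"
    and "msupp M = UNIV"
    and "mu \<in> measurement1 M"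
    and "bounded (UNIV :: 'a set)"
    and "diameter (msupp mu) = diameter (UNIV :: 'a set)"
  shows "maximal_in_measurement1 M mu"
proof -
  obtain g where g: "1-lipschitz_on UNIV g" "mu = distr M borel g"
    using assms(4) unfolding measurement1_def by auto
  have "msupp mu \<subseteq> closure (range g)"
    using msupp_distr[OF assms(2) lipschitz_on_continuous_on[OF g(1)]] g(2) by simp
  then have Tb: "bounded (msupp mu)"
    using lip_range_bounded[OF assms(5) g(1)] bounded_closure bounded_subset by blast
  show ?thesis unfolding maximal_in_measurement1_def
  proof (intro conjI ballI impI)
    show "mu \<in> measurement1 M" by (rule assms(4))
    fix nu assume nu: "nu \<in> measurement1 M" and le: "lip_le mu nu"
    obtain h where h: "1-lipschitz_on UNIV h" "nu = distr M borel h"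
      using nu unfolding measurement1_def by auto
    obtain f where f: "1-lipschitz_on (msupp nu) f" "f ` msupp nu \<subseteq> msupp mu"
        "distr (restrict_space nu (msupp nu)) borel f = mu"
      using le unfolding lip_le_def by auto
    have snu: "sets nu = sets borel" using h(2) by simp
    have hb: "bounded (range h)" using lip_range_bounded[OF assms(5) h(1)] .
    have Ssub: "msupp nu \<subseteq> closure (range h)"
      using msupp_distr[OF assms(2) lipschitz_on_continuous_on[OF h(1)]] h(2) by simp
    then have Sb: "bounded (msupp nu)"
      using hb bounded_closure bounded_subset by blast
    have "diameter (msupp nu) \<le> diameter (closure (range h))"
      using diameter_subset[OF Ssub bounded_closure[OF hb]] .
    also have "\<dots> = diameter (range h)" using diameter_closure[OF hb] .
    also have "\<dots> \<le> diameter (UNIV :: 'a set)"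
    proof (rule diameter_le)
      show "range h \<noteq> {} \<or> 0 \<le> diameter (UNIV :: 'a set)" by simp
      fix x y assume "x \<in> range h" "y \<in> range h"
      then obtain x' y' where xy: "x = h x'" "y = h y'" by auto
      have "dist (h x') (h y') \<le> dist x' y'"
        using h(1) unfolding lipschitz_on_def by auto
      also have "\<dots> \<le> diameter (UNIV :: 'a set)"
        using diameter_bounded_bound[OF assms(5)] by simp
      finally show "norm (x - y) \<le> diameter (UNIV :: 'a set)"
        using xy by (simp add: dist_real_def)
    qed
    finally have D: "diameter (msupp nu) \<le> diameter (msupp mu)" using assms(6) by simp
    have dense: "msupp mu \<subseteq> closure (f ` msupp nu)"
      using msupp_dense[OF snu lipschitz_on_continuous_on[OF f(1)]] f(3) by simp
    have iso: "(\<forall>x\<in>msupp nu. \<forall>y\<in>msupp nu. dist (f x) (f y) = dist x y) \<and> f ` msupp nu = msupp mu"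
      by (rule key_real[OF msupp_closed[OF snu] Sb Tb f(1) f(2) dense D])
    show "mm_iso_real nu mu" unfolding mm_iso_real_def using iso f(3) by blast
  qed
qed

end
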